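(* For every integer $n \geq 5$, $\gamma_{b,2}(C_5 \square C_n) = n$.
   Context: For a graph $G$, a $2$-limited broadcast is a function $f: V(G) \to \{0,1,2\}$. A vertex $u$ hears the broadcast from $v$ if $f(v) > 0$ and $d(u,v) \leq f(v)$, where $d$ is the distance in $G$. The broadcast $f$ is dominating if every vertex of $G$ hears the broadcast from some vertex. The cost of $f$ is $\sum_{v \in V(G)} f(v)$. The $2$-limited broadcast domination number $\gamma_{b,2}(G)$ is the minimum cost of a $2$-limited dominating broadcast on $G$. $C_n$ denotes the cycle on $n$ vertices and $\square$ the Cartesian product of graphs. *)

theory Defs
  imports Main
begin

fun walk :: "('a \<Rightarrow> 'a \<Rightarrow> bool) \<Rightarrow> nat \<Rightarrow> 'a \<Rightarrow> 'a \<Rightarrow> bool" where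
  "walk E 0 u v = (u = v)"
| "walk E (Suc k) u v = (\<exists>w. E u w \<and> walk E k w v)"

(* graph distance (shortest walk length); all graphs used below are connected *)
definition gdist :: "('a \<Rightarrow> 'a \<Rightarrow> bool) \<Rightarrow> 'a \<Rightarrow> 'a \<Rightarrow> nat" where
  "gdist E u v = (LEAST k. walk E k u v)"

definition limited_broadcast2 :: "'a set \<Rightarrow> ('a \<Rightarrow> nat) \<Rightarrow> bool" where
  "limited_broadcast2 V f \<longleftrightarrow> (\<forall>v\<in>V. f v \<le> 2) \<and> (\<forall>v. v \<notin> V \<longrightarrow> f v = 0)"

definition hears :: "('a \<Rightarrow> 'a \<Rightarrow> bool) \<Rightarrow> ('a \<Rightarrow> nat) \<Rightarrow> 'a \<Rightarrow> 'a \<Rightarrow> bool" where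
  "hears E f u v \<longleftrightarrow> f v > 0 \<and> gdist E u v \<le> f v"

definition dominating_broadcast2 :: "'a set \<Rightarrow> ('a \<Rightarrow> 'a \<Rightarrow> bool) \<Rightarrow> ('a \<Rightarrow> nat) \<Rightarrow> bool" where
  "dominating_broadcast2 V E f \<longleftrightarrow>
     limited_broadcast2 V f \<and> (\<forall>u\<in>V. \<exists>v\<in>V. hears E f u v)"

definition bcost :: "'a set \<Rightarrow> ('a \<Rightarrow> nat) \<Rightarrow> nat" where
  "bcost V f = (\<Sum>v\<in>V. f v)"

definition gamma_b2 :: "'a set \<Rightarrow> ('a \<Rightarrow> 'a \<Rightarrow> bool) \<Rightarrow> nat" where
  "gamma_b2 V E = (LEAST c. \<exists>f. dominating_broadcast2 V E f \<and> bcost V f = c)"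

definition cycle_verts :: "nat \<Rightarrow> nat set" where
  "cycle_verts n = {0..<n}"

definition cycle_adj :: "nat \<Rightarrow> nat \<Rightarrow> nat \<Rightarrow> bool" where
  "cycle_adj n i j \<longleftrightarrow> i < n \<and> j < n \<and> (j = (i + 1) mod n \<or> i = (j + 1) mod n)"

definition cart_verts :: "'a set \<Rightarrow> 'b set \<Rightarrow> ('a \<times> 'b) set" where
  "cart_verts V W = V \<times> W"

definition cart_adj :: "('a \<Rightarrow> 'a \<Rightarrow> bool) \<Rightarrow> ('b \<Rightarrow> 'b \<Rightarrow> bool) \<Rightarrow> ('a \<times> 'b) \<Rightarrow> ('a \<times> 'b) \<Rightarrow> bool" where
  "cart_adj E F p q \<longleftrightarrow> (fst p = fst q \<and> F (snd p) (snd q)) \<or> (snd p = snd q \<and> E (fst p) (fst q))"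

end

theory Submission
  imports Defs
begin


definition cdist :: "nat \<Rightarrow> nat \<Rightarrow> nat \<Rightarrow> nat" where
  "cdist m a b = min (if a \<le> b then b - a else a - b) (m - (if a \<le> b then b - a else a - b))"

lemma walk_trans: "walk E k u w \<Longrightarrow> walk E l w v \<Longrightarrow> walk E (k + l) u v"
  by (induction k arbitrary: u) auto

lemma walk_snoc: "walk E k u w \<Longrightarrow> E w v \<Longrightarrow> walk E (Suc k) u v"
  using walk_trans[of E k u w 1 v] by auto

lemma walk_sym:
  assumes "\<And>x y. E x y \<Longrightarrow> E y x"
  shows "walk E k u v \<Longrightarrow> walk E k v u"
proof (induction k arbitrary: u)
  case 0 then show ?case by simp
next
  case (Suc k)
  then obtain w where "E u w" "walk E k w v" by auto
  then have "walk E k v w" using Suc.IH by blast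
  then show ?case using walk_snoc[of E k v w u] assms[OF \<open>E u w\<close>] by blast
qed

lemma cycle_adj_sym: "cycle_adj m x y \<Longrightarrow> cycle_adj m y x"
  unfolding cycle_adj_def by auto

lemma cycle_walk_sym: "walk (cycle_adj m) k x y \<Longrightarrow> walk (cycle_adj m) k y x"
proof -
  have "\<And>x y. cycle_adj m x y \<Longrightarrow> cycle_adj m y x" by (rule cycle_adj_sym)
  then show "walk (cycle_adj m) k x y \<Longrightarrow> walk (cycle_adj m) k y x" by (rule walk_sym)
qed

lemma cycle_walk_fwd:
  assumes "a < m"
  shows "walk (cycle_adj m) k a ((a + k) mod m)"
  using assms
proof (induction k arbitrary: a)
  case 0 then show ?case by simp
next
  case (Suc k)
  have m: "0 < m" using Suc.prems by simp
  have s: "cycle_adj m a ((a + 1) mod m)" using Suc.prems m unfolding cycle_adj_def by simp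
  have "(a + 1) mod m < m" using m by simp
  then have w: "walk (cycle_adj m) k ((a + 1) mod m) (((a + 1) mod m + k) mod m)"
    by (rule Suc.IH)
  have e: "((a + 1) mod m + k) mod m = (a + Suc k) mod m"
    by (simp add: mod_add_left_eq)
  show ?case using s w unfolding e walk.simps by blast
qed

lemma cycle_walk:
  assumes "a < m" "b < m"
  shows "walk (cycle_adj m) (cdist m a b) a b"
proof -
  have w1: "walk (cycle_adj m) (y - x) x y" if "x < m" "y < m" "x \<le> y" for x y
  proof -
    have "(x + (y - x)) mod m = y" using that by simp
    then show ?thesis using cycle_walk_fwd[of x m "y - x"] that(1) by simp
  qed
  have w2: "walk (cycle_adj m) (m - (y - x)) x y" if "x < m" "y < m" "x \<le> y" for x y
  proof -
    have e: "(y + (m - (y - x))) mod m = x"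
    proof -
      have "y + (m - (y - x)) = x + m" using that by simp
      then show ?thesis using that(1) by simp
    qed
    have "walk (cycle_adj m) (m - (y - x)) y x"
      using cycle_walk_fwd[of y m "m - (y - x)"] that(2) unfolding e .
    then show ?thesis by (rule cycle_walk_sym)
  qed
  show ?thesis
  proof (cases "a \<le> b")
    case True
    have "cdist m a b = b - a \<or> cdist m a b = m - (b - a)" unfolding cdist_def using True by (simp add: min_def)
    then show ?thesis using w1[OF assms True] w2[OF assms True] by metis
  next
    case False
    then have ba: "b \<le> a" by simp
    have "cdist m a b = a - b \<or> cdist m a b = m - (a - b)" unfolding cdist_def using False by (simp add: min_def)
    moreover have "walk (cycle_adj m) (a - b) a b" by (rule walk_sym[OF cycle_adj_sym w1[OF assms(2,1) ba]])
    moreover have "walk (cycle_adj m) (m - (a - b)) a b" by (rule walk_sym[OF cycle_adj_sym w2[OF assms(2,1) ba]])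
    ultimately show ?thesis by metis
  qed
qed

lemma walk_lift1:
  "walk E k a b \<Longrightarrow> walk (cart_adj E F) k (a, y) (b, y)"
  by (induction k arbitrary: a) (auto simp: cart_adj_def)

lemma walk_lift2:
  "walk F k a b \<Longrightarrow> walk (cart_adj E F) k (x, a) (x, b)"
  by (induction k arbitrary: a) (auto simp: cart_adj_def)

abbreviation "VV n \<equiv> cart_verts (cycle_verts 5) (cycle_verts n)"
abbreviation "EE n \<equiv> cart_adj (cycle_adj 5) (cycle_adj n)"

lemma prod_walk:
  assumes "a < 5" "c < 5" "b < n" "d < n"
  shows "walk (EE n) (cdist 5 a c + cdist n b d) (a, b) (c, d)"
  using walk_trans[OF walk_lift1[OF cycle_walk[of a 5 c]] walk_lift2[OF cycle_walk[of b n d]]] assms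
  by simp

lemma cycle_adj_cases:
  assumes "cycle_adj m i w"
  shows "i < m \<and> w < m \<and> ((w = i + 1) \<or> (i + 1 = m \<and> w = 0) \<or> (i = w + 1) \<or> (w + 1 = m \<and> i = 0))"
proof -
  have b: "i < m" "w < m" using assms unfolding cycle_adj_def by auto
  have "w = (i + 1) mod m \<or> i = (w + 1) mod m" using assms unfolding cycle_adj_def by auto
  moreover have "(i + 1) mod m = (if i + 1 = m then 0 else i + 1)" using b by auto
  moreover have "(w + 1) mod m = (if w + 1 = m then 0 else w + 1)" using b by auto
  ultimately show ?thesis using b by (auto split: if_splits)
qed

lemma cdist_step:
  assumes "cycle_adj m i w" "c < m"
  shows "cdist m i c \<le> cdist m w c + 1"
  using cycle_adj_cases[OF assms(1)] assms(2) unfolding cdist_def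
  by (auto simp: min_def split: if_splits)

lemma walk_lower:
  assumes "walk (EE n) k u v" "fst v < 5" "snd v < n"
  shows "cdist 5 (fst u) (fst v) + cdist n (snd u) (snd v) \<le> k"
  using assms
proof (induction k arbitrary: u)
  case 0 then show ?case by (simp add: cdist_def)
next
  case (Suc k)
  then obtain w where uw: "EE n u w" and wv: "walk (EE n) k w v" by auto
  have IH: "cdist 5 (fst w) (fst v) + cdist n (snd w) (snd v) \<le> k" using Suc.IH wv Suc.prems by blast
  from uw show ?case
    unfolding cart_adj_def
  proof
    assume "fst u = fst w \<and> cycle_adj n (snd u) (snd w)"
    then show ?thesis using cdist_step[of n "snd u" "snd w" "snd v"] IH Suc.prems by auto
  next
    assume "snd u = snd w \<and> cycle_adj 5 (fst u) (fst w)"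
    then show ?thesis using cdist_step[of 5 "fst u" "fst w" "fst v"] IH Suc.prems by auto
  qed
qed

lemma gdist_eq:
  assumes "a < 5" "c < 5" "b < n" "d < n"
  shows "gdist (EE n) (a, b) (c, d) = cdist 5 a c + cdist n b d"
proof -
  let ?k = "cdist 5 a c + cdist n b d"
  have w: "walk (EE n) ?k (a, b) (c, d)" using prod_walk assms by blast
  have le: "gdist (EE n) (a, b) (c, d) \<le> ?k" unfolding gdist_def using w by (rule Least_le)
  have "walk (EE n) (gdist (EE n) (a, b) (c, d)) (a, b) (c, d)" unfolding gdist_def using w by (rule LeastI)
  then have "?k \<le> gdist (EE n) (a, b) (c, d)" using walk_lower[of n _ "(a,b)" "(c,d)"] assms by auto
  then show ?thesis using le by simp
qed



definition D1 :: "nat \<Rightarrow> nat" where "D1 c = c + c div 2"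
definition D2 :: "nat \<Rightarrow> nat" where "D2 c = c div 2"
definition AA :: "nat \<Rightarrow> int" where "AA c = (if c \<ge> 3 then 2 else if c = 2 then 1 else 0)"
definition BB :: "nat \<Rightarrow> int" where "BB c = (if c \<ge> 1 then int c - 1 else 0)"
definition FR :: "nat \<Rightarrow> nat \<Rightarrow> int" where "FR x u = (if x = 0 then BB u - AA u else BB u)"

lemma local_ineq:
  assumes "c = 0 \<Longrightarrow> 5 \<le> D1 x + D1 y + D2 u + D2 v"
  shows "2 + (if y = 0 then AA c else 0) + (if x = 0 then AA c else 0)
           + (if v = 0 then FR y c else 0) + (if u = 0 then FR x c else 0)
         \<le> 2 * int c + (if c = 0 then AA x + AA y + FR x u + FR y v else 0)"
proof (cases "c = 0")
  case True
  then have h: "5 \<le> D1 x + D1 y + D2 u + D2 v" using assms by simp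
  have "2 \<le> AA x + AA y + FR x u + FR y v"
    using h unfolding D1_def D2_def AA_def BB_def FR_def
    by (auto split: if_splits) 
  moreover have "AA c = 0" "\<And>y. FR y c = 0" using True by (auto simp: AA_def BB_def FR_def)
  ultimately show ?thesis using True by (simp only: if_True if_False mult_zero_right of_nat_0 add_0_right) (simp split del: if_split)
next
  case False
  then show ?thesis unfolding AA_def BB_def FR_def by (auto split: if_splits)
qed

lemma shift_sum1:
  fixes G :: "int \<Rightarrow> int"
  assumes per: "\<And>z. G (z + int n) = G z"
  shows "(\<Sum>k<n. G (int k + 1)) = (\<Sum>k<n. G (int k))"
proof -
  have "(\<Sum>k<Suc n. G (int k)) = G (int 0) + (\<Sum>k<n. G (int (Suc k)))" by (rule sum.lessThan_Suc_shift)
  moreover have "(\<Sum>k<Suc n. G (int k)) = (\<Sum>k<n. G (int k)) + G (int n)" by simp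
  moreover have "G (int n) = G 0" using per[of 0] by simp
  ultimately show ?thesis by (simp add: add.commute)
qed

lemma shift_sums:
  fixes G :: "int \<Rightarrow> int"
  assumes per: "\<And>z. G (z + int n) = G z"
  shows "(\<Sum>k<n. G (int k + 1)) = (\<Sum>k<n. G (int k))"
    and "(\<Sum>k<n. G (int k - 1)) = (\<Sum>k<n. G (int k))"
    and "(\<Sum>k<n. G (int k + 2)) = (\<Sum>k<n. G (int k))"
    and "(\<Sum>k<n. G (int k - 2)) = (\<Sum>k<n. G (int k))"
proof -
  have gen: "(\<Sum>k<n. G (int k + d + 1)) = (\<Sum>k<n. G (int k + d))" for d
  proof -
    have p: "\<And>z. G (z + int n + d) = G (z + d)"
    proof -
      fix z
      have "z + int n + d = (z + d) + int n" by simp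
      then show "G (z + int n + d) = G (z + d)" using per[of "z + d"] by metis
    qed
    have "(\<Sum>k<n. G (int k + 1 + d)) = (\<Sum>k<n. G (int k + d))"
      using shift_sum1[of "\<lambda>z. G (z + d)" n] p by blast
    then show ?thesis by (simp add: algebra_simps)
  qed
  show a: "(\<Sum>k<n. G (int k + 1)) = (\<Sum>k<n. G (int k))" using gen[of 0] by simp
  have "(\<Sum>k<n. G (int k + (-1) + 1)) = (\<Sum>k<n. G (int k + (-1)))" by (rule gen)
  then show b: "(\<Sum>k<n. G (int k - 1)) = (\<Sum>k<n. G (int k))" by simp
  have "(\<Sum>k<n. G (int k + 1 + 1)) = (\<Sum>k<n. G (int k + 1))" by (rule gen)
  then show "(\<Sum>k<n. G (int k + 2)) = (\<Sum>k<n. G (int k))" using a by (simp add: add.assoc)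
  have "(\<Sum>k<n. G (int k + (-2) + 1)) = (\<Sum>k<n. G (int k + (-2)))" by (rule gen)
  then have "(\<Sum>k<n. G (int k - 2)) = (\<Sum>k<n. G (int k - 1))" by (simp add: algebra_simps)
  then show "(\<Sum>k<n. G (int k - 2)) = (\<Sum>k<n. G (int k))" using b by simp
qed

lemma discharge:
  fixes X :: "int \<Rightarrow> nat" and n :: nat
  assumes per: "\<And>z. X (z + int n) = X z"
    and cov: "\<And>z. X z = 0 \<Longrightarrow> 5 \<le> D1 (X (z - 1)) + D1 (X (z + 1)) + D2 (X (z - 2)) + D2 (X (z + 2))"
  shows "int n \<le> (\<Sum>k<n. int (X (int k)))"
proof -
  define iL where "iL z = (if X z = 0 then AA (X (z - 1)) else 0)" for z
  define iR where "iR z = (if X z = 0 then AA (X (z + 1)) else 0)" for z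
  define iLL where "iLL z = (if X z = 0 then FR (X (z - 1)) (X (z - 2)) else 0)" for z
  define iRR where "iRR z = (if X z = 0 then FR (X (z + 1)) (X (z + 2)) else 0)" for z
  have loc: "2 + iL (z + 1) + iR (z - 1) + iLL (z + 2) + iRR (z - 2)
       \<le> 2 * int (X z) + (iL z + iR z + iLL z + iRR z)" for z
  proof -
    have "2 + (if X (z + 1) = 0 then AA (X z) else 0) + (if X (z - 1) = 0 then AA (X z) else 0)
           + (if X (z + 2) = 0 then FR (X (z + 1)) (X z) else 0) + (if X (z - 2) = 0 then FR (X (z - 1)) (X z) else 0)
         \<le> 2 * int (X z) + (if X z = 0 then AA (X (z - 1)) + AA (X (z + 1)) + FR (X (z - 1)) (X (z - 2)) + FR (X (z + 1)) (X (z + 2)) else 0)"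
      by (rule local_ineq) (rule cov)
    moreover have "(if X z = 0 then AA (X (z - 1)) + AA (X (z + 1)) + FR (X (z - 1)) (X (z - 2)) + FR (X (z + 1)) (X (z + 2)) else 0)
       = iL z + iR z + iLL z + iRR z" unfolding iL_def iR_def iLL_def iRR_def by simp
    moreover have "iL (z + 1) = (if X (z + 1) = 0 then AA (X z) else 0)" unfolding iL_def by simp
    moreover have "iR (z - 1) = (if X (z - 1) = 0 then AA (X z) else 0)" unfolding iR_def by simp
    moreover have "iLL (z + 2) = (if X (z + 2) = 0 then FR (X (z + 1)) (X z) else 0)" unfolding iLL_def
      by (simp add: algebra_simps)
    moreover have "iRR (z - 2) = (if X (z - 2) = 0 then FR (X (z - 1)) (X z) else 0)" unfolding iRR_def
      by (simp add: algebra_simps)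
    ultimately show ?thesis by linarith
  qed
  have pL: "\<And>z. iL (z + int n) = iL z" unfolding iL_def using per
    by (metis add.commute add_diff_eq diff_add_eq)
  have pR: "\<And>z. iR (z + int n) = iR z" unfolding iR_def using per
    by (metis add.commute add.left_commute)
  have pLL: "\<And>z. iLL (z + int n) = iLL z" unfolding iLL_def using per
    by (metis add.commute add_diff_eq diff_add_eq)
  have pRR: "\<And>z. iRR (z + int n) = iRR z" unfolding iRR_def using per
    by (metis add.commute add.left_commute)
  have "(\<Sum>k<n. 2 + iL (int k + 1) + iR (int k - 1) + iLL (int k + 2) + iRR (int k - 2))
      \<le> (\<Sum>k<n. 2 * int (X (int k)) + (iL (int k) + iR (int k) + iLL (int k) + iRR (int k)))"
    by (rule sum_mono) (rule loc)
  also have "\<dots> = 2 * (\<Sum>k<n. int (X (int k))) + ((\<Sum>k<n. iL (int k)) + (\<Sum>k<n. iR (int k)) + (\<Sum>k<n. iLL (int k)) + (\<Sum>k<n. iRR (int k)))"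
    by (simp add: sum.distrib sum_distrib_left)
  finally have "2 * int n + ((\<Sum>k<n. iL (int k + 1)) + (\<Sum>k<n. iR (int k - 1)) + (\<Sum>k<n. iLL (int k + 2)) + (\<Sum>k<n. iRR (int k - 2)))
      \<le> 2 * (\<Sum>k<n. int (X (int k))) + ((\<Sum>k<n. iL (int k)) + (\<Sum>k<n. iR (int k)) + (\<Sum>k<n. iLL (int k)) + (\<Sum>k<n. iRR (int k)))"
    by (simp add: sum.distrib)
  moreover have "(\<Sum>k<n. iL (int k + 1)) = (\<Sum>k<n. iL (int k))" by (rule shift_sums(1)) (rule pL)
  moreover have "(\<Sum>k<n. iR (int k - 1)) = (\<Sum>k<n. iR (int k))" by (rule shift_sums(2)) (rule pR)
  moreover have "(\<Sum>k<n. iLL (int k + 2)) = (\<Sum>k<n. iLL (int k))" by (rule shift_sums(3)) (rule pLL)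
  moreover have "(\<Sum>k<n. iRR (int k - 2)) = (\<Sum>k<n. iRR (int k))" by (rule shift_sums(4)) (rule pRR)
  ultimately show ?thesis by linarith
qed



definition hh :: "nat \<Rightarrow> nat \<Rightarrow> nat" where
  "hh f d = (if f = 0 \<or> f < d then 0 else if f = d then 1 else if f = Suc d then 3 else 5)"

definition GG :: "nat \<Rightarrow> nat \<Rightarrow> nat" where
  "GG c d = (if d = 0 then 5 * c else if d = 1 then D1 c else if d = 2 then D2 c else 0)"

definition dt :: "nat \<Rightarrow> nat" where "dt t = (if t \<le> 2 then 2 - t else t - 2)"

lemma cdist_le1:
  assumes "i < 5" "a < 5" "cdist 5 i a \<le> 1"
  shows "i \<in> {a, (a + 1) mod 5, (a + 4) mod 5}"
proof -
  have "i \<in> {0,1,2,3,4}" "a \<in> {0,1,2,3,4}" using assms by auto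
  then show ?thesis using assms(3) by (auto simp: cdist_def)
qed

lemma cdist_0:
  assumes "i < m" "a < m" "cdist m i a = 0"
  shows "i = a"
  using assms unfolding cdist_def by (auto simp: min_def split: if_splits)

lemma card_R:
  assumes "a < 5" "f \<le> 2"
  shows "card {i. i < 5 \<and> 0 < f \<and> cdist 5 i a + d \<le> f} \<le> hh f d"
proof -
  let ?S = "{i. i < 5 \<and> 0 < f \<and> cdist 5 i a + d \<le> f}"
  consider "f = 0 \<or> f < d" | "\<not> (f = 0 \<or> f < d)" "f = d" | "\<not> (f = 0 \<or> f < d)" "f \<noteq> d" "f = Suc d"
    | "\<not> (f = 0 \<or> f < d)" "f \<noteq> d" "f \<noteq> Suc d" by blast
  then show ?thesis
  proof cases
    case 1
    then have "?S = {}" by auto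
    then show ?thesis by (metis card.empty zero_le)
  next
    case 2
    then have "?S \<subseteq> {a}" using cdist_0[of _ 5 a] assms by auto
    then have "card ?S \<le> card {a}" by (intro card_mono) auto
    then show ?thesis using 2 by (simp add: hh_def)
  next
    case 3
    then have "?S \<subseteq> {a, (a + 1) mod 5, (a + 4) mod 5}" using cdist_le1[of _ a] assms by auto
    then have "card ?S \<le> card {a, (a + 1) mod 5, (a + 4) mod 5}" by (intro card_mono) auto
    also have "\<dots> \<le> 3" by (rule order_trans[OF card_insert_le_m1]) (auto intro!: order_trans[OF card_insert_le_m1])
    finally show ?thesis using 3 by (simp add: hh_def)
  next
    case 4
    have "?S \<subseteq> {..<5}" by auto
    then have "card ?S \<le> card {..<5::nat}" by (intro card_mono) auto
    then show ?thesis using 4 by (simp add: hh_def)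
  qed
qed

lemma sum_div2:
  fixes g :: "'a \<Rightarrow> nat"
  shows "finite A \<Longrightarrow> (\<Sum>a\<in>A. g a div 2) \<le> (\<Sum>a\<in>A. g a) div 2"
proof (induction A rule: finite_induct)
  case empty then show ?case by simp
next
  case (insert x F)
  then show ?case by simp
qed

lemma sum_hh:
  fixes g :: "nat \<Rightarrow> nat"
  assumes "\<And>a. a < 5 \<Longrightarrow> g a \<le> 2"
  shows "(\<Sum>a<5. hh (g a) d) \<le> GG (\<Sum>a<5. g a) d"
proof -
  consider "d = 0" | "d = 1" | "d = 2" | "d \<ge> 3" by linarith
  then show ?thesis
  proof cases
    case 1
    have "(\<Sum>a<5. hh (g a) d) \<le> (\<Sum>a<5. 5 * g a)"
      by (rule sum_mono) (use 1 in \<open>auto simp: hh_def\<close>)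
    then show ?thesis using 1 by (simp add: GG_def sum_distrib_left)
  next
    case 2
    have "(\<Sum>a<5. hh (g a) d) = (\<Sum>a<5. g a + g a div 2)"
    proof (rule sum.cong)
      fix a assume "a \<in> {..<5::nat}"
      then have "g a \<le> 2" using assms by auto
      then show "hh (g a) d = g a + g a div 2" using 2 by (auto simp: hh_def)
    qed simp
    also have "\<dots> = (\<Sum>a<5. g a) + (\<Sum>a<5. g a div 2)" by (simp add: sum.distrib)
    also have "\<dots> \<le> (\<Sum>a<5. g a) + (\<Sum>a<5. g a) div 2" using sum_div2[of "{..<5::nat}" g] by simp
    finally show ?thesis using 2 by (simp add: GG_def D1_def)
  next
    case 3
    have "(\<Sum>a<5. hh (g a) d) = (\<Sum>a<5. g a div 2)"
    proof (rule sum.cong)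
      fix a assume "a \<in> {..<5::nat}"
      then have "g a \<le> 2" using assms by auto
      then show "hh (g a) d = g a div 2" using 3 by (auto simp: hh_def)
    qed simp
    also have "\<dots> \<le> (\<Sum>a<5. g a) div 2" using sum_div2[of "{..<5::nat}" g] by simp
    finally show ?thesis using 3 by (simp add: GG_def D2_def)
  next
    case 4
    have "(\<Sum>a<5. hh (g a) d) = 0"
    proof (rule sum.neutral, rule ballI)
      fix a assume "a \<in> {..<5::nat}"
      then have "g a < d" using assms[of a] 4 by auto
      then show "hh (g a) d = 0" by (simp add: hh_def)
    qed
    then show ?thesis by simp
  qed
qed

lemma wlemma:
  assumes "j < n" "k < n" "5 \<le> n" "cdist n j k \<le> 2"
  shows "\<exists>t<5. k = nat ((int j - 2 + int t) mod int n) \<and> cdist n j k = dt t"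
proof (cases "j \<le> k")
  case True
  show ?thesis
  proof (cases "k - j \<le> 2")
    case a: True
    then have cd: "cdist n j k = k - j" using True assms unfolding cdist_def by auto
    have "int j - 2 + int (k - j + 2) = int k" using True by simp
    then show ?thesis using cd a assms True by (intro exI[of _ "k - j + 2"]) (auto simp: dt_def)
  next
    case b: False
    then have cd: "cdist n j k = n - (k - j)" using True assms unfolding cdist_def by auto
    have "int j - 2 + int (2 - (n - (k - j))) = int k - int n" using True b assms cd by auto
    moreover have "(int k - int n) mod int n = int k" using assms
      by simp
    ultimately show ?thesis using cd b assms True by (intro exI[of _ "2 - (n - (k - j))"]) (auto simp: dt_def)
  qed
next
  case False
  show ?thesis
  proof (cases "j - k \<le> 2")
    case a: True
    then have cd: "cdist n j k = j - k" using False assms unfolding cdist_def by auto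
    have "int j - 2 + int (2 - (j - k)) = int k" using False a by simp
    then show ?thesis using cd a assms False by (intro exI[of _ "2 - (j - k)"]) (auto simp: dt_def)
  next
    case b: False
    then have cd: "cdist n j k = n - (j - k)" using False assms unfolding cdist_def by auto
    have "int j - 2 + int (2 + (n - (j - k))) = int k + int n" using False b assms cd by auto
    moreover have "(int k + int n) mod int n = int k" using assms by simp
    ultimately show ?thesis using cd b assms False by (intro exI[of _ "2 + (n - (j - k))"]) (auto simp: dt_def)
  qed
qed



lemma coverage:
  assumes n5: "5 \<le> n" and dom: "dominating_broadcast2 (VV n) (EE n) f" and j: "j < n"
    and cj: "(\<Sum>a<5. f (a, j)) = 0"
    and Xd: "X = (\<lambda>z::int. \<Sum>a<5. f (a, nat (z mod int n)))"
  shows "5 \<le> D1 (X (int j - 1)) + D1 (X (int j + 1)) + D2 (X (int j - 2)) + D2 (X (int j + 2))"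
proof -
  define w where "w t = nat ((int j - 2 + int t) mod int n)" for t
  define R where "R t a = {i. i < 5 \<and> 0 < f (a, w t) \<and> cdist 5 i a + dt t \<le> f (a, w t)}" for t a
  have fb: "f (a, k) \<le> 2" if "a < 5" "k < n" for a k
    using dom that unfolding dominating_broadcast2_def limited_broadcast2_def
    by (auto simp: cart_verts_def cycle_verts_def)
  have wn: "w t < n" for t unfolding w_def using n5
    by (metis Euclidean_Rings.pos_mod_bound nat_less_iff of_nat_0_less_iff order_less_le_trans zero_less_numeral pos_mod_sign)
  have cov: "{..<5} \<subseteq> (\<Union>t<5. \<Union>a<5. R t a)"
  proof
    fix i assume i: "i \<in> {..<5::nat}"
    then have "(i, j) \<in> VV n" using j by (simp add: cart_verts_def cycle_verts_def)
    then obtain v where v: "v \<in> VV n" "hears (EE n) f (i, j) v"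
      using dom unfolding dominating_broadcast2_def by blast
    obtain a k where vak: "v = (a, k)" by (cases v)
    have ak: "a < 5" "k < n" using v(1) vak by (auto simp: cart_verts_def cycle_verts_def)
    have h: "0 < f (a, k)" "gdist (EE n) (i, j) (a, k) \<le> f (a, k)" using v(2) vak unfolding hears_def by auto
    have ge: "gdist (EE n) (i, j) (a, k) = cdist 5 i a + cdist n j k" using gdist_eq[of i a j n k] i ak j by simp
    have "cdist n j k \<le> 2" using h ge fb[OF ak] by linarith
    then obtain t where t: "t < 5" "k = w t" "cdist n j k = dt t" using wlemma[OF j ak(2) n5] unfolding w_def by blast
    then have "i \<in> R t a" unfolding R_def using i h ge by auto
    then show "i \<in> (\<Union>t<5. \<Union>a<5. R t a)" using t ak by blast
  qed
  have fin: "finite (R t a)" for t a unfolding R_def by simp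
  have "5 = card {..<5::nat}" by simp
  also have "\<dots> \<le> card (\<Union>t<5. \<Union>a<5. R t a)" by (rule card_mono) (use cov fin in auto)
  also have "\<dots> \<le> (\<Sum>t<5. card (\<Union>a<5. R t a))" by (rule card_UN_le) simp
  also have "\<dots> \<le> (\<Sum>t<5. \<Sum>a<5. card (R t a))" by (rule sum_mono, rule card_UN_le) simp
  also have "\<dots> \<le> (\<Sum>t<5. \<Sum>a<5. hh (f (a, w t)) (dt t))"
  proof (rule sum_mono, rule sum_mono)
    fix t a assume "t \<in> {..<5::nat}" "a \<in> {..<5::nat}"
    then show "card (R t a) \<le> hh (f (a, w t)) (dt t)" unfolding R_def
      using card_R[of a "f (a, w t)" "dt t"] fb[of a "w t"] wn by auto
  qed
  also have "\<dots> \<le> (\<Sum>t<5. GG (\<Sum>a<5. f (a, w t)) (dt t))"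
  proof (rule sum_mono)
    fix t assume "t \<in> {..<5::nat}"
    show "(\<Sum>a<5. hh (f (a, w t)) (dt t)) \<le> GG (\<Sum>a<5. f (a, w t)) (dt t)"
      by (rule sum_hh) (use fb wn in auto)
  qed
  also have "\<dots> = (\<Sum>t<5. GG (X (int j - 2 + int t)) (dt t))" unfolding Xd w_def by simp
  also have "\<dots> = GG (X (int j - 2 + int 0)) (dt 0) + GG (X (int j - 2 + int 1)) (dt 1) + GG (X (int j - 2 + int 2)) (dt 2)
      + GG (X (int j - 2 + int 3)) (dt 3) + GG (X (int j - 2 + int 4)) (dt 4)"
    by (simp add: numeral_eq_Suc)
  also have "\<dots> = GG (X (int j - 2)) 2 + GG (X (int j - 1)) 1 + GG (X (int j)) 0 + GG (X (int j + 1)) 1 + GG (X (int j + 2)) 2"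
    by (simp add: dt_def algebra_simps)
  also have "\<dots> = D2 (X (int j - 2)) + D1 (X (int j - 1)) + D1 (X (int j + 1)) + D2 (X (int j + 2))"
  proof -
    have "X (int j) = 0" using cj j unfolding Xd by simp
    then show ?thesis by (simp add: GG_def)
  qed
  finally show ?thesis by simp
qed

lemma bcost_cols:
  "bcost (VV n) f = (\<Sum>k<n. \<Sum>a<5. f (a, k))"
proof -
  have "bcost (VV n) f = (\<Sum>p\<in>{0..<5::nat} \<times> {0..<n}. f p)"
    by (simp add: bcost_def cart_verts_def cycle_verts_def)
  also have "\<dots> = (\<Sum>a\<in>{0..<5::nat}. \<Sum>k\<in>{0..<n}. f (a, k))"
    using sum.cartesian_product[where A="{0..<5::nat}" and B="{0..<n}" and g="\<lambda>a k. f (a, k)"] by simp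
  also have "\<dots> = (\<Sum>k\<in>{0..<n}. \<Sum>a\<in>{0..<5::nat}. f (a, k))" by (rule sum.swap)
  finally show ?thesis by (simp add: atLeast0LessThan)
qed

lemma lower:
  assumes n5: "5 \<le> n" and dom: "dominating_broadcast2 (VV n) (EE n) f"
  shows "n \<le> bcost (VV n) f"
proof -
  define X where "X = (\<lambda>z::int. \<Sum>a<5. f (a, nat (z mod int n)))"
  have per: "X (z + int n) = X z" for z unfolding X_def by simp
  have cov: "5 \<le> D1 (X (z - 1)) + D1 (X (z + 1)) + D2 (X (z - 2)) + D2 (X (z + 2))" if "X z = 0" for z
  proof -
    define j where "j = nat (z mod int n)"
    have jn: "j < n" unfolding j_def using n5
      by (metis Euclidean_Rings.pos_mod_bound nat_less_iff of_nat_0_less_iff order_less_le_trans zero_less_numeral pos_mod_sign)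
    have ij: "int j = z mod int n" unfolding j_def using n5 by simp
    have sh: "X (z + d) = X (int j + d)" for d
      unfolding X_def ij by (simp add: mod_add_left_eq)
    have cj: "(\<Sum>a<5. f (a, j)) = 0" using that unfolding X_def j_def by simp
    have "5 \<le> D1 (X (int j - 1)) + D1 (X (int j + 1)) + D2 (X (int j - 2)) + D2 (X (int j + 2))"
      by (rule coverage[OF n5 dom jn cj X_def])
    moreover have "X (z - 1) = X (int j - 1)" "X (z - 2) = X (int j - 2)"
      using sh[of "-1"] sh[of "-2"] by simp_all
    moreover have "X (z + 1) = X (int j + 1)" "X (z + 2) = X (int j + 2)" using sh by simp_all
    ultimately show ?thesis by simp
  qed
  have "int n \<le> (\<Sum>k<n. int (X (int k)))" by (rule discharge) (use per cov in auto)
  also have "\<dots> = int (\<Sum>k<n. \<Sum>a<5. f (a, k))" unfolding X_def by simp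
  finally show ?thesis using bcost_cols[of n f] by linarith
qed



definition pat4 :: "nat \<Rightarrow> nat \<Rightarrow> nat" where
  "pat4 p i = (if p = 0 \<and> i = 0 then 2 else if p = 2 \<and> i = 3 then 2 else 0)"
definition pat5 :: "nat \<Rightarrow> nat \<Rightarrow> nat" where
  "pat5 p i = (if p = 0 \<and> i = 0 then 2 else if p = 2 \<and> i = 2 then 1 else if p = 3 \<and> i = 3 then 2 else 0)"
definition fB :: "nat \<Rightarrow> nat \<Rightarrow> nat \<times> nat \<Rightarrow> nat" where
  "fB q n p = (if fst p < 5 \<and> snd p < n then
      (if snd p < 4 * q then pat4 (snd p mod 4) (fst p) else pat5 ((snd p - 4 * q) mod 5) (fst p)) else 0)"

lemma hl:
  assumes "a < 5" "k < n" "i < 5" "j < n" "f (a, k) = s" "0 < s" "cdist 5 i a + cdist n j k \<le> s"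
  shows "\<exists>v\<in>VV n. hears (EE n) f (i, j) v"
proof -
  have "gdist (EE n) (i, j) (a, k) = cdist 5 i a + cdist n j k" using gdist_eq assms by blast
  then have "hears (EE n) f (i, j) (a, k)" using assms unfolding hears_def by simp
  moreover have "(a, k) \<in> VV n" using assms by (simp add: cart_verts_def cycle_verts_def)
  ultimately show ?thesis by blast
qed

lemma cd_le: "cdist n j k \<le> (if j \<le> k then k - j else j - k)"
  unfolding cdist_def by simp

lemma cd_wrap: "0 < n \<Longrightarrow> cdist n (n - 1) 0 \<le> 1"
  unfolding cdist_def by simp

lemma cd5: "i < 5 \<Longrightarrow> a < 5 \<Longrightarrow> cdist 5 i a \<le> 2"
proof -
  assume "i < 5" "a < 5"
  then have "i \<in> {0,1,2,3,4}" "a \<in> {0,1,2,3,4}" by auto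
  then show ?thesis by (auto simp: cdist_def)
qed

lemma bulk_dec: "(j::nat) < 4*q \<Longrightarrow> \<exists>k p. j = 4*k + p \<and> p < 4 \<and> k < q"
  by (intro exI[of _ "j div 4"] exI[of _ "j mod 4"]) auto

lemma tail_dec: "\<not> (j::nat) < 4*q \<Longrightarrow> j < 4*q + 5*r \<Longrightarrow> \<exists>l p. j = 4*q + 5*l + p \<and> p < 5 \<and> l < r"
proof -
  assume a: "\<not> j < 4*q" "j < 4*q + 5*r"
  define m where "m = j - 4*q"
  have "j = 4*q + 5*(m div 5) + m mod 5" using a unfolding m_def by simp
  moreover have "m div 5 < r" using a unfolding m_def by auto
  ultimately show ?thesis by (intro exI[of _ "m div 5"] exI[of _ "m mod 5"]) auto
qed

lemma cdl: "cdist n j k \<le> d \<Longrightarrow> cdist n j k \<le> d" .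

lemma next_start:
  assumes n: "n = 4 * q + 5 * r" "5 \<le> n" and j: "j < n"
    and st: "j + 1 < n \<Longrightarrow> fB q n (0, j + 1) = 2"
    and i: "i < 5" "cdist 5 i 0 \<le> 1"
  shows "\<exists>v\<in>VV n. hears (EE n) (fB q n) (i, j) v"
proof (cases "j + 1 < n")
  case True
  have f: "fB q n (0, j + 1) = 2" using st True by blast
  have "cdist n j (j + 1) \<le> 1" using cd_le[of n j "j + 1"] by simp
  then show ?thesis using hl[of 0 "j + 1" n i j "fB q n" 2] True i j f by simp
next
  case False
  then have jn: "j = n - 1" using j by simp
  have f: "fB q n (0, 0) = 2" using n by (cases "0 < q") (auto simp: fB_def pat4_def pat5_def)
  have n0: "0 < n" using n(2) by linarith
  have "cdist n (n - 1) 0 \<le> 1" by (rule cd_wrap[OF n0])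
  then have "cdist n j 0 \<le> 1" using jn by simp
  then show ?thesis using hl[of 0 0 n i j "fB q n" 2] f i j n0 by simp
qed

lemma m4s[simp]: "Suc (4 * k) mod 4 = 1" "Suc (Suc (4 * k)) mod 4 = 2" "Suc (Suc (Suc (4 * k))) mod 4 = 3"
  "(4 * k + 1) mod 4 = 1" "(4 * k + 2) mod 4 = 2" "(4 * k + 3) mod 4 = 3" for k :: nat
  by presburger+

lemma m5s[simp]: "Suc (5 * k) mod 5 = 1" "Suc (Suc (5 * k)) mod 5 = 2" "Suc (Suc (Suc (5 * k))) mod 5 = 3"
  "Suc (Suc (Suc (Suc (5 * k)))) mod 5 = 4"
  "(5 * k + 1) mod 5 = 1" "(5 * k + 2) mod 5 = 2" "(5 * k + 3) mod 5 = 3" "(5 * k + 4) mod 5 = 4" for k :: nat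
  by presburger+

lemma i5: "(i::nat) < 5 \<Longrightarrow> i = 0 \<or> i = 1 \<or> i = 2 \<or> i = 3 \<or> i = 4" by auto

lemma dom_fB:
  assumes n: "n = 4 * q + 5 * r" "5 \<le> n"
  shows "dominating_broadcast2 (VV n) (EE n) (fB q n)"
proof -
  let ?f = "fB q n"
  have lim: "limited_broadcast2 (VV n) ?f"
    unfolding limited_broadcast2_def
    by (auto simp: fB_def pat4_def pat5_def cart_verts_def cycle_verts_def)
  have cdI: "cdist n x y \<le> d" if "(if x \<le> y then y - x else x - y) \<le> d" for x y d
    using cd_le[of n x y] that by linarith
  have "\<exists>v\<in>VV n. hears (EE n) ?f (i, j) v" if i: "i < 5" and j: "j < n" for i j
  proof (cases "j < 4 * q")
    case True
    then obtain k p where kp: "j = 4 * k + p" "p < 4" "k < q" using bulk_dec by blast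
    have kq: "4 * k + 3 < 4 * q" using kp by linarith
    have "p = 0 \<or> p = 1 \<or> p = 2 \<or> p = 3" using kp by auto
    then show ?thesis
    proof (elim disjE)
      assume p: "p = 0"
      have "?f (0, j) = 2" using kp kq j p by (simp add: fB_def pat4_def)
      then show ?thesis using hl[of 0 j n i j ?f 2] cd5[OF i, of 0] i j by (simp add: cdist_def)
    next
      assume p: "p = 1"
      show ?thesis
      proof (cases "i = 0 \<or> i = 1 \<or> i = 4")
        case c: True
        have "?f (0, 4 * k) = 2" using kq j kp by (simp add: fB_def pat4_def)
        moreover have "cdist n j (4 * k) \<le> 1" using kp p by (intro cdI) simp
        moreover have "cdist 5 i 0 \<le> 1" using c by (auto simp: cdist_def)
        ultimately show ?thesis using hl[of 0 "4 * k" n i j ?f 2] i j kp p by simp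
      next
        case c: False
        have "?f (3, 4 * k + 2) = 2" using kq n by (simp add: fB_def pat4_def)
        moreover have "cdist n j (4 * k + 2) \<le> 1" using kp p by (intro cdI) simp
        moreover have "cdist 5 i 3 \<le> 1" using c i5[OF i] by (auto simp: cdist_def)
        ultimately show ?thesis using hl[of 3 "4 * k + 2" n i j ?f 2] i j kq n by simp
      qed
    next
      assume p: "p = 2"
      have "?f (3, j) = 2" using kp kq j p by (simp add: fB_def pat4_def)
      then show ?thesis using hl[of 3 j n i j ?f 2] cd5[OF i, of 3] i j by (simp add: cdist_def)
    next
      assume p: "p = 3"
      show ?thesis
      proof (cases "i = 0 \<or> i = 1")
        case c: True
        then have ci: "cdist 5 i 0 \<le> 1" by (auto simp: cdist_def)
        have "?f (0, j + 1) = 2" if "j + 1 < n"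
        proof (cases "k + 1 < q")
          case True
          then have "4 * k + 4 < 4 * q" by linarith
          then show ?thesis using that kp p by (simp add: fB_def pat4_def)
        next
          case False
          then have "4 * k + 4 = 4 * q" using kp by linarith
          then show ?thesis using that kp p by (simp add: fB_def pat5_def)
        qed
        then show ?thesis using next_start[OF n j _ i ci] by blast
      next
        case c: False
        have "?f (3, 4 * k + 2) = 2" using kq n by (simp add: fB_def pat4_def)
        moreover have "cdist n j (4 * k + 2) \<le> 1" using kp p by (intro cdI) simp
        moreover have "cdist 5 i 3 \<le> 1" using c i5[OF i] by (auto simp: cdist_def)
        ultimately show ?thesis using hl[of 3 "4 * k + 2" n i j ?f 2] i j kq n by simp
      qed
    qed
  next
    case False
    then obtain l p where lp: "j = 4 * q + 5 * l + p" "p < 5" "l < r" using tail_dec j n by blast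
    have lr: "4 * q + 5 * l + 4 < n" using lp n by linarith
    have "p = 0 \<or> p = 1 \<or> p = 2 \<or> p = 3 \<or> p = 4" using lp by auto
    then show ?thesis
    proof (elim disjE)
      assume p: "p = 0"
      have "?f (0, j) = 2" using lp j p by (simp add: fB_def pat5_def)
      then show ?thesis using hl[of 0 j n i j ?f 2] cd5[OF i, of 0] i j by (simp add: cdist_def)
    next
      assume p: "p = 1"
      show ?thesis
      proof (cases "i = 0 \<or> i = 1 \<or> i = 4")
        case c: True
        have "?f (0, 4 * q + 5 * l) = 2" using lr by (simp add: fB_def pat5_def)
        moreover have "cdist n j (4 * q + 5 * l) \<le> 1" using lp p by (intro cdI) simp
        moreover have "cdist 5 i 0 \<le> 1" using c by (auto simp: cdist_def)
        ultimately show ?thesis using hl[of 0 "4 * q + 5 * l" n i j ?f 2] i j lr by simp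
      next
        case c: False
        then have "i = 2 \<or> i = 3" using i by auto
        then show ?thesis
        proof
          assume i2: "i = 2"
          have "?f (2, 4 * q + 5 * l + 2) = 1" using lr by (simp add: fB_def pat5_def)
          moreover have "cdist n j (4 * q + 5 * l + 2) \<le> 1" using lp p by (intro cdI) simp
          ultimately show ?thesis using hl[of 2 "4 * q + 5 * l + 2" n i j ?f 1] i j lr i2 by (simp add: cdist_def)
        next
          assume i3: "i = 3"
          have "?f (3, 4 * q + 5 * l + 3) = 2" using lr by (simp add: fB_def pat5_def)
          moreover have "cdist n j (4 * q + 5 * l + 3) \<le> 2" using lp p by (intro cdI) simp
          ultimately show ?thesis using hl[of 3 "4 * q + 5 * l + 3" n i j ?f 2] i j lr i3 by (simp add: cdist_def)
        qed
      qed
    next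
      assume p: "p = 2"
      show ?thesis
      proof (cases "i = 1 \<or> i = 2 \<or> i = 3")
        case c: True
        have "?f (2, j) = 1" using lp p lr by (simp add: fB_def pat5_def)
        moreover have "cdist 5 i 2 \<le> 1" using c by (auto simp: cdist_def)
        ultimately show ?thesis using hl[of 2 j n i j ?f 1] i j by (simp add: cdist_def)
      next
        case c: False
        then have "i = 0 \<or> i = 4" using i by auto
        then show ?thesis
        proof
          assume i0: "i = 0"
          have "?f (0, 4 * q + 5 * l) = 2" using lr by (simp add: fB_def pat5_def)
          moreover have "cdist n j (4 * q + 5 * l) \<le> 2" using lp p by (intro cdI) simp
          ultimately show ?thesis using hl[of 0 "4 * q + 5 * l" n i j ?f 2] i j lr i0 by (simp add: cdist_def)
        next
          assume i4: "i = 4"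
          have "?f (3, 4 * q + 5 * l + 3) = 2" using lr by (simp add: fB_def pat5_def)
          moreover have "cdist n j (4 * q + 5 * l + 3) \<le> 1" using lp p by (intro cdI) simp
          ultimately show ?thesis using hl[of 3 "4 * q + 5 * l + 3" n i j ?f 2] i j lr i4 by (simp add: cdist_def)
        qed
      qed
    next
      assume p: "p = 3"
      have "?f (3, j) = 2" using lp p lr by (simp add: fB_def pat5_def)
      then show ?thesis using hl[of 3 j n i j ?f 2] cd5[OF i, of 3] i j by (simp add: cdist_def)
    next
      assume p: "p = 4"
      show ?thesis
      proof (cases "i = 0 \<or> i = 1")
        case c: True
        then have ci: "cdist 5 i 0 \<le> 1" by (auto simp: cdist_def)
        have "?f (0, j + 1) = 2" if "j + 1 < n"
        proof -
          have "j + 1 = 4 * q + 5 * (l + 1)" using lp p by simp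
          then show ?thesis using that by (simp add: fB_def pat5_def)
        qed
        then show ?thesis using next_start[OF n j _ i ci] by blast
      next
        case c: False
        have "?f (3, 4 * q + 5 * l + 3) = 2" using lr by (simp add: fB_def pat5_def)
        moreover have "cdist n j (4 * q + 5 * l + 3) \<le> 1" using lp p by (intro cdI) simp
        moreover have "cdist 5 i 3 \<le> 1" using c i5[OF i] by (auto simp: cdist_def)
        ultimately show ?thesis using hl[of 3 "4 * q + 5 * l + 3" n i j ?f 2] i j lr by simp
      qed
    qed
  qed
  then show ?thesis using lim unfolding dominating_broadcast2_def
    by (auto simp: cart_verts_def cycle_verts_def)
qed



lemma sum_split_add: fixes a b :: nat shows "(\<Sum>k<a + b. g k) = (\<Sum>k<a. g k) + (\<Sum>k<b. g (a + k))"
  by (induction b) (simp_all add: add.assoc)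

lemma sum_per4: "(\<Sum>k<4 * q. g (k mod 4)) = q * (g 0 + g 1 + g 2 + g (3::nat) :: nat)"
proof (induction q)
  case 0 then show ?case by simp
next
  case (Suc q)
  have "(\<Sum>k<4 * Suc q. g (k mod 4)) = (\<Sum>k<4 * q. g (k mod 4)) + (\<Sum>k<4. g ((4 * q + k) mod 4))"
  proof -
    have e: "4 * Suc q = 4 * q + 4" by simp
    show ?thesis unfolding e sum_split_add ..
  qed
  also have "(\<Sum>k<4. g ((4 * q + k) mod 4)) = g 0 + g 1 + g 2 + g 3"
    by (simp add: lessThan_nat_numeral)
  finally show ?case using Suc by simp
qed

lemma sum_per5: "(\<Sum>k<5 * q. g (k mod 5)) = q * (g 0 + g 1 + g 2 + g 3 + g (4::nat) :: nat)"
proof (induction q)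
  case 0 then show ?case by simp
next
  case (Suc q)
  have "(\<Sum>k<5 * Suc q. g (k mod 5)) = (\<Sum>k<5 * q. g (k mod 5)) + (\<Sum>k<5. g ((5 * q + k) mod 5))"
  proof -
    have e: "5 * Suc q = 5 * q + 5" by simp
    show ?thesis unfolding e sum_split_add ..
  qed
  also have "(\<Sum>k<5. g ((5 * q + k) mod 5)) = g 0 + g 1 + g 2 + g 3 + g 4"
    by (simp add: lessThan_nat_numeral)
  finally show ?case using Suc by simp
qed

lemma cost_fB:
  assumes n: "n = 4 * q + 5 * r"
  shows "bcost (VV n) (fB q n) = n"
proof -
  define c4 where "c4 p = (\<Sum>a<5. pat4 p a)" for p
  define c5 where "c5 p = (\<Sum>a<5. pat5 p a)" for p
  have col: "(\<Sum>a<5. fB q n (a, k)) = (if k < 4 * q then c4 (k mod 4) else c5 ((k - 4 * q) mod 5))" if "k < n" for k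
    using that unfolding c4_def c5_def fB_def by simp
  have "bcost (VV n) (fB q n) = (\<Sum>k<n. \<Sum>a<5. fB q n (a, k))" by (rule bcost_cols)
  also have "\<dots> = (\<Sum>k<n. (if k < 4 * q then c4 (k mod 4) else c5 ((k - 4 * q) mod 5)))"
    by (rule sum.cong) (simp_all add: col)
  also have "\<dots> = (\<Sum>k<4 * q. c4 (k mod 4)) + (\<Sum>k<5 * r. c5 (k mod 5))"
    unfolding n sum_split_add by simp
  also have "\<dots> = q * (c4 0 + c4 1 + c4 2 + c4 3) + r * (c5 0 + c5 1 + c5 2 + c5 3 + c5 4)"
    by (simp add: sum_per4 sum_per5)
  also have "\<dots> = n" unfolding n c4_def c5_def by (simp add: lessThan_nat_numeral pat4_def pat5_def)
  finally show ?thesis .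
qed

definition FL :: "((nat \<times> nat) \<times> nat) list \<Rightarrow> nat \<Rightarrow> nat \<Rightarrow> nat" where
  "FL L i j = (case map_of L (i, j) of None \<Rightarrow> 0 | Some s \<Rightarrow> s)"

definition fL :: "((nat \<times> nat) \<times> nat) list \<Rightarrow> nat \<Rightarrow> nat \<times> nat \<Rightarrow> nat" where
  "fL L n p = (if fst p < 5 \<and> snd p < n then FL L (fst p) (snd p) else 0)"

lemma dom_concrete:
  assumes b: "\<And>i j. FL L i j \<le> 2"
    and chk: "\<forall>i<5. \<forall>j<n. \<exists>p\<in>set (map fst L). fst p < 5 \<and> snd p < n \<and> 0 < FL L (fst p) (snd p)
               \<and> cdist 5 i (fst p) + cdist n j (snd p) \<le> FL L (fst p) (snd p)"
  shows "dominating_broadcast2 (VV n) (EE n) (fL L n)"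
proof -
  have lim: "limited_broadcast2 (VV n) (fL L n)"
    unfolding limited_broadcast2_def using b by (auto simp: fL_def cart_verts_def cycle_verts_def)
  have "\<exists>v\<in>VV n. hears (EE n) (fL L n) (i, j) v" if i: "i < 5" and j: "j < n" for i j
  proof -
    obtain a k where ak: "a < 5" "k < n" "0 < FL L a k" "cdist 5 i a + cdist n j k \<le> FL L a k"
      using chk i j by fastforce
    have "fL L n (a, k) = FL L a k" using ak by (simp add: fL_def)
    then show ?thesis using hl[of a k n i j "fL L n" "FL L a k"] ak i j by simp
  qed
  then show ?thesis using lim unfolding dominating_broadcast2_def
    by (auto simp: cart_verts_def cycle_verts_def)
qed

definition L6 :: "((nat \<times> nat) \<times> nat) list" where
  "L6 = [((0,0),2), ((2,2),1), ((3,3),2), ((1,5),1)]"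
definition L7 :: "((nat \<times> nat) \<times> nat) list" where
  "L7 = [((0,0),2), ((2,2),1), ((4,3),1), ((1,4),1), ((3,6),2)]"
definition L11 :: "((nat \<times> nat) \<times> nat) list" where
  "L11 = [((0,0),2), ((2,2),2), ((4,4),2), ((1,6),2), ((3,8),2), ((1,10),1)]"

lemma ex6: "dominating_broadcast2 (VV 6) (EE 6) (fL L6 6) \<and> bcost (VV 6) (fL L6 6) = 6"
proof
  show "dominating_broadcast2 (VV 6) (EE 6) (fL L6 6)"
    by (rule dom_concrete) (simp_all add: FL_def L6_def cdist_def less_Suc_eq numeral_eq_Suc)
  show "bcost (VV 6) (fL L6 6) = 6"
    unfolding bcost_cols by (simp add: fL_def FL_def L6_def lessThan_nat_numeral)
qed

lemma ex7: "dominating_broadcast2 (VV 7) (EE 7) (fL L7 7) \<and> bcost (VV 7) (fL L7 7) = 7"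
proof
  show "dominating_broadcast2 (VV 7) (EE 7) (fL L7 7)"
    by (rule dom_concrete) (simp_all add: FL_def L7_def cdist_def less_Suc_eq numeral_eq_Suc)
  show "bcost (VV 7) (fL L7 7) = 7"
    unfolding bcost_cols by (simp add: fL_def FL_def L7_def lessThan_nat_numeral)
qed

lemma ex11: "dominating_broadcast2 (VV 11) (EE 11) (fL L11 11) \<and> bcost (VV 11) (fL L11 11) = 11"
proof
  show "dominating_broadcast2 (VV 11) (EE 11) (fL L11 11)"
    by (rule dom_concrete) (simp_all add: FL_def L11_def cdist_def less_Suc_eq numeral_eq_Suc)
  show "bcost (VV 11) (fL L11 11) = 11"
    unfolding bcost_cols by (simp add: fL_def FL_def L11_def lessThan_nat_numeral)
qed

lemma decomp:
  assumes "5 \<le> (n::nat)" "n \<noteq> 6" "n \<noteq> 7" "n \<noteq> 11"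
  shows "\<exists>q r. n = 4 * q + 5 * r"
proof -
  have "n mod 4 = 0 \<or> n mod 4 = 1 \<or> n mod 4 = 2 \<or> n mod 4 = 3" by auto
  then show ?thesis
  proof (elim disjE)
    assume h: "n mod 4 = 0"
    have "n = 4 * (n div 4) + 5 * 0" using h by presburger
    then show ?thesis by blast
  next
    assume h: "n mod 4 = 1"
    have "n = 4 * ((n - 5) div 4) + 5 * 1" using h assms by presburger
    then show ?thesis by blast
  next
    assume h: "n mod 4 = 2"
    then have "10 \<le> n" using assms by presburger
    then have "n = 4 * ((n - 10) div 4) + 5 * 2" using h by presburger
    then show ?thesis by blast
  next
    assume h: "n mod 4 = 3"
    then have "15 \<le> n" using assms by presburger
    then have "n = 4 * ((n - 15) div 4) + 5 * 3" using h by presburger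
    then show ?thesis by blast
  qed
qed

lemma exists_n:
  assumes "5 \<le> n"
  shows "\<exists>f. dominating_broadcast2 (VV n) (EE n) f \<and> bcost (VV n) f = n"
proof -
  consider "n = 6" | "n = 7" | "n = 11" | "n \<noteq> 6" "n \<noteq> 7" "n \<noteq> 11" by blast
  then show ?thesis
  proof cases
    case 1 then show ?thesis using ex6 by blast
  next
    case 2 then show ?thesis using ex7 by blast
  next
    case 3 then show ?thesis using ex11 by blast
  next
    case 4
    then obtain q r where n: "n = 4 * q + 5 * r" using decomp assms by blast
    show ?thesis using dom_fB[OF n assms] cost_fB[OF n] by blast
  qed
qed

theorem theorem4p5:
  fixes n :: nat
  assumes "n \<ge> 5"
  shows "gamma_b2 (cart_verts (cycle_verts 5) (cycle_verts n))
                  (cart_adj (cycle_adj 5) (cycle_adj n)) = n"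
proof -
  let ?P = "\<lambda>c. \<exists>f. dominating_broadcast2 (VV n) (EE n) f \<and> bcost (VV n) f = c"
  have ex: "?P n" using exists_n assms by blast
  have le: "gamma_b2 (VV n) (EE n) \<le> n" unfolding gamma_b2_def using ex by (rule Least_le)
  have "?P (gamma_b2 (VV n) (EE n))" unfolding gamma_b2_def using ex by (rule LeastI)
  then obtain f where "dominating_broadcast2 (VV n) (EE n) f" "bcost (VV n) f = gamma_b2 (VV n) (EE n)" by blast
  then have "n \<le> gamma_b2 (VV n) (EE n)" using lower[OF assms] by metis
  then show ?thesis using le by simp
qed


end
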